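(* Let $n\ge2$ and let $\mathfrak{g}_n$ be the Lie algebra defined in the context. The linear map $\rho:\mathfrak{g}_n\to\mathfrak{sl}_{2(n-1)}(\mathbb{K})$ sending $$x=ah+bx_++cx_-+\sum_{i=1}^{n-2}(d_iy_{i,+}+e_iy_{i,-})+\sum_{1\le i\le j\le n-2}m_{ij}z_{i,j}$$ to the $2(n-1)\times2(n-1)$ matrix $X$ whose rows $1,\dots,n-2$ are zero, whose row $n-1$ is $(d_1,\dots,d_{n-2},a,b,0,\dots,0)$, whose row $n$ is $(e_1,\dots,e_{n-2},c,-a,0,\dots,0)$, and whose row $n+i$ ($1\le i\le n-2$) is $(\mu_{i1},\dots,\mu_{i,n-2},-e_i,d_i,0,\dots,0)$, where $\mu$ is the symmetric $(n-2)\times(n-2)$ matrix with $\mu_{ii}=2m_{ii}$ and $\mu_{ij}=\mu_{ji}=m_{ij}$ for $i<j$, is a faithful representation of $\mathfrak{g}_n$. Equivalently, in terms of matrix units $E_{i,j}$: $\rho(x_+)=E_{n-1,n}$, $\rho(x_-)=E_{n,n-1}$, $\rho(h)=E_{n-1,n-1}-E_{n,n}$, $\rho(y_{i,+})=E_{n-1,i}+E_{n+i,n}$, $\rho(y_{i,-})=E_{n,i}-E_{n+i,n-1}$, $\rho(z_{i,j})=E_{i+n,j}+E_{j+n,i}$.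
   Context: $\mathbb{K}$ is $\mathbb{R}$ or $\mathbb{C}$. For $n\ge2$, $\mathfrak{g}_n$ is the Lie algebra with basis $h,x_-,x_+$, $y_{i,\pm}$ ($1\le i\le n-2$), $z_{i,j}$ ($1\le i\le j\le n-2$), with Lie bracket defined by the nonzero brackets (up to antisymmetry) $[x_+,x_-]=h$, $[h,x_\pm]=\pm2x_\pm$, $[h,y_{i,\pm}]=\pm y_{i,\pm}$, $[x_-,y_{i,+}]=y_{i,-}$, $[x_+,y_{i,-}]=y_{i,+}$, $[y_{i,+},y_{j,-}]=z_{\min(i,j),\max(i,j)}$, all other brackets of basis elements being zero. $E_{i,j}$ denotes the matrix whose only nonzero entry is a $1$ in position $(i,j)$. *)

theory Defs
  imports Complex_Main
begin

text \<open>Basis of g_n: H = h, Xp = x_+, Xm = x_-, Yp i = y_{i,+}, Ym i = y_{i,-}, Z i j = z_{i,j}.\<close>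
datatype gb = H | Xp | Xm | Yp nat | Ym nat | Z nat nat

definition gbasis :: "nat \<Rightarrow> gb set" where
  "gbasis n = {H, Xp, Xm} \<union> {Yp i | i. 1 \<le> i \<and> i \<le> n - 2} \<union> {Ym i | i. 1 \<le> i \<and> i \<le> n - 2}
     \<union> {Z i j | i j. 1 \<le> i \<and> i \<le> j \<and> j \<le> n - 2}"

text \<open>Elements of g_n over K: coefficient functions supported on the basis.\<close>
definition gelem :: "nat \<Rightarrow> (gb \<Rightarrow> 'k::zero) set" where
  "gelem n = {u. \<forall>b. b \<notin> gbasis n \<longrightarrow> u b = 0}"

definition gunit :: "gb \<Rightarrow> gb \<Rightarrow> 'k::{zero,one}" where
  "gunit b = (\<lambda>c. if c = b then 1 else 0)"

fun brb :: "gb \<Rightarrow> gb \<Rightarrow> gb \<Rightarrow> 'k::comm_ring_1" where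
  "brb Xp Xm = gunit H"
| "brb Xm Xp = (\<lambda>c. - gunit H c)"
| "brb H Xp = (\<lambda>c. 2 * gunit Xp c)"
| "brb Xp H = (\<lambda>c. - 2 * gunit Xp c)"
| "brb H Xm = (\<lambda>c. - 2 * gunit Xm c)"
| "brb Xm H = (\<lambda>c. 2 * gunit Xm c)"
| "brb H (Yp i) = gunit (Yp i)"
| "brb (Yp i) H = (\<lambda>c. - gunit (Yp i) c)"
| "brb H (Ym i) = (\<lambda>c. - gunit (Ym i) c)"
| "brb (Ym i) H = gunit (Ym i)"
| "brb Xm (Yp i) = gunit (Ym i)"
| "brb (Yp i) Xm = (\<lambda>c. - gunit (Ym i) c)"
| "brb Xp (Ym i) = gunit (Yp i)"
| "brb (Ym i) Xp = (\<lambda>c. - gunit (Yp i) c)"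
| "brb (Yp i) (Ym j) = gunit (Z (min i j) (max i j))"
| "brb (Ym j) (Yp i) = (\<lambda>c. - gunit (Z (min i j) (max i j)) c)"
| "brb _ _ = (\<lambda>c. 0)"

definition glie :: "nat \<Rightarrow> (gb \<Rightarrow> 'k::comm_ring_1) \<Rightarrow> (gb \<Rightarrow> 'k) \<Rightarrow> gb \<Rightarrow> 'k" where
  "glie n u v = (\<lambda>c. \<Sum>b1\<in>gbasis n. \<Sum>b2\<in>gbasis n. u b1 * v b2 * brb b1 b2 c)"

text \<open>Square matrices of size 2(n-1), indices 1..2(n-1), as functions nat => nat => K
  (entries outside the index range are 0).\<close>
definition msize :: "nat \<Rightarrow> nat" where "msize n = 2 * (n - 1)"

definition mmul :: "nat \<Rightarrow> (nat \<Rightarrow> nat \<Rightarrow> 'k::comm_ring_1) \<Rightarrow> (nat \<Rightarrow> nat \<Rightarrow> 'k) \<Rightarrow> nat \<Rightarrow> nat \<Rightarrow> 'k" where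
  "mmul n A B = (\<lambda>i j. \<Sum>k\<in>{1..msize n}. A i k * B k j)"

definition mcomm :: "nat \<Rightarrow> (nat \<Rightarrow> nat \<Rightarrow> 'k::comm_ring_1) \<Rightarrow> (nat \<Rightarrow> nat \<Rightarrow> 'k) \<Rightarrow> nat \<Rightarrow> nat \<Rightarrow> 'k" where
  "mcomm n A B = (\<lambda>i j. mmul n A B i j - mmul n B A i j)"

definition mtrace :: "nat \<Rightarrow> (nat \<Rightarrow> nat \<Rightarrow> 'k::comm_ring_1) \<Rightarrow> 'k" where
  "mtrace n A = (\<Sum>i\<in>{1..msize n}. A i i)"

definition E :: "nat \<Rightarrow> nat \<Rightarrow> nat \<Rightarrow> nat \<Rightarrow> 'k::{zero,one}" where
  "E i j = (\<lambda>r c. if r = i \<and> c = j then 1 else 0)"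

definition gmu :: "(gb \<Rightarrow> 'k::comm_ring_1) \<Rightarrow> nat \<Rightarrow> nat \<Rightarrow> 'k" where
  "gmu u i j = (if i = j then 2 * u (Z i i) else if i < j then u (Z i j) else u (Z j i))"

definition rho :: "nat \<Rightarrow> (gb \<Rightarrow> 'k::comm_ring_1) \<Rightarrow> nat \<Rightarrow> nat \<Rightarrow> 'k" where
  "rho n u = (\<lambda>r c.
     if r < 1 \<or> c < 1 \<or> r > msize n \<or> c > msize n then 0
     else if r \<le> n - 2 then 0
     else if r = n - 1 then
       (if c \<le> n - 2 then u (Yp c) else if c = n - 1 then u H else if c = n then u Xp else 0)
     else if r = n then
       (if c \<le> n - 2 then u (Ym c) else if c = n - 1 then u Xm else if c = n then - u H else 0)
     else
       (let i = r - n in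
         if c \<le> n - 2 then gmu u i c else if c = n - 1 then - u (Ym i)
         else if c = n then u (Yp i) else 0))"

definition rho_faithful_sl :: "nat \<Rightarrow> 'k::comm_ring_1 itself \<Rightarrow> bool" where
  "rho_faithful_sl n _ \<longleftrightarrow>
     (\<forall>u\<in>(gelem n :: (gb \<Rightarrow> 'k) set). \<forall>v\<in>gelem n.
        rho n (\<lambda>b. u b + v b) = (\<lambda>r c. rho n u r c + rho n v r c)) \<and>
     (\<forall>u\<in>(gelem n :: (gb \<Rightarrow> 'k) set). \<forall>s::'k.
        rho n (\<lambda>b. s * u b) = (\<lambda>r c. s * rho n u r c)) \<and>
     (\<forall>u\<in>(gelem n :: (gb \<Rightarrow> 'k) set). mtrace n (rho n u) = 0) \<and>
     (\<forall>u\<in>(gelem n :: (gb \<Rightarrow> 'k) set). \<forall>v\<in>gelem n.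
        rho n (glie n u v) = mcomm n (rho n u) (rho n v)) \<and>
     inj_on (rho n) (gelem n :: (gb \<Rightarrow> 'k) set) \<and>
     rho n (gunit Xp :: gb \<Rightarrow> 'k) = E (n - 1) n \<and>
     rho n (gunit Xm :: gb \<Rightarrow> 'k) = E n (n - 1) \<and>
     rho n (gunit H :: gb \<Rightarrow> 'k) = (\<lambda>r c. E (n - 1) (n - 1) r c - E n n r c) \<and>
     (\<forall>i. 1 \<le> i \<and> i \<le> n - 2 \<longrightarrow>
        rho n (gunit (Yp i) :: gb \<Rightarrow> 'k) = (\<lambda>r c. E (n - 1) i r c + E (n + i) n r c) \<and>
        rho n (gunit (Ym i) :: gb \<Rightarrow> 'k) = (\<lambda>r c. E n i r c - E (n + i) (n - 1) r c)) \<and>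
     (\<forall>i j. 1 \<le> i \<and> i \<le> j \<and> j \<le> n - 2 \<longrightarrow>
        rho n (gunit (Z i j) :: gb \<Rightarrow> 'k) = (\<lambda>r c. E (i + n) j r c + E (j + n) i r c))"

end

theory Submission
  imports Defs
begin

lemma finite_gbasis: "finite (gbasis n)"
proof -
  have "gbasis n \<subseteq> {H, Xp, Xm} \<union> Yp ` {1..n-2} \<union> Ym ` {1..n-2}
      \<union> (\<lambda>p. Z (fst p) (snd p)) ` ({1..n-2} \<times> {1..n-2})"
    unfolding gbasis_def by (auto simp: image_iff)
  then show ?thesis by (rule finite_subset) auto
qed

lemma glie_supp:
  fixes u v :: "gb \<Rightarrow> 'k::comm_ring_1"
  assumes "T \<subseteq> gbasis n \<times> gbasis n"
    and "\<And>a b. (a, b) \<notin> T \<Longrightarrow> brb a b c = (0::'k::comm_ring_1)"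
  shows "glie n u v c = (\<Sum>p\<in>T. u (fst p) * v (snd p) * brb (fst p) (snd p) c)"
proof -
  have "glie n u v c = (\<Sum>p\<in>gbasis n \<times> gbasis n. u (fst p) * v (snd p) * brb (fst p) (snd p) c)"
    unfolding glie_def by (simp add: sum.cartesian_product case_prod_beta)
  also have "\<dots> = (\<Sum>p\<in>T. u (fst p) * v (snd p) * brb (fst p) (snd p) c)"
    proof (rule sum.mono_neutral_right)
    show "\<forall>p\<in>gbasis n \<times> gbasis n - T. u (fst p) * v (snd p) * brb (fst p) (snd p) c = 0"
    proof
      fix p assume "p \<in> gbasis n \<times> gbasis n - T"
      then have "brb (fst p) (snd p) c = (0::'k)" using assms(2)[of "fst p" "snd p"] by auto
      then show "u (fst p) * v (snd p) * brb (fst p) (snd p) c = 0" by simp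
    qed
  qed (use assms(1) finite_gbasis in auto)
  finally show ?thesis .
qed

lemma glie_H: "glie n u v H = (u Xp * v Xm - u Xm * v Xp :: 'k::comm_ring_1)"
proof -
  have "glie n u v H = (\<Sum>p\<in>{(Xp,Xm),(Xm,Xp)}. u (fst p) * v (snd p) * brb (fst p) (snd p) H)"
    apply (rule glie_supp)
     apply (simp add: gbasis_def)
    subgoal for a b by (cases a; cases b) (auto simp: gunit_def)
    done
  then show ?thesis by (simp add: gunit_def)
qed

lemma glie_Xp: assumes "True" shows "glie n u v (Xp) = (2 * u H * v Xp - 2 * u Xp * v H :: 'k::comm_ring_1)"
proof -
  have "glie n u v (Xp) = (\<Sum>p\<in>{(H,Xp),(Xp,H)}. u (fst p) * v (snd p) * brb (fst p) (snd p) (Xp))"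
    apply (rule glie_supp)
    using assms apply (simp add: gbasis_def)
    subgoal for a b by (cases a; cases b) (auto simp: gunit_def)
    done
  then show ?thesis using assms by (simp add: gunit_def algebra_simps)
qed

lemma glie_Xm: assumes "True" shows "glie n u v (Xm) = (2 * u Xm * v H - 2 * u H * v Xm :: 'k::comm_ring_1)"
proof -
  have "glie n u v (Xm) = (\<Sum>p\<in>{(H,Xm),(Xm,H)}. u (fst p) * v (snd p) * brb (fst p) (snd p) (Xm))"
    apply (rule glie_supp)
    using assms apply (simp add: gbasis_def)
    subgoal for a b by (cases a; cases b) (auto simp: gunit_def)
    done
  then show ?thesis using assms by (simp add: gunit_def algebra_simps)
qed

lemma glie_Yp: assumes "1 \<le> i" "i \<le> n - 2" shows "glie n u v (Yp i) = (u H * v (Yp i) - u (Yp i) * v H + u Xp * v (Ym i) - u (Ym i) * v Xp :: 'k::comm_ring_1)"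
proof -
  have "glie n u v (Yp i) = (\<Sum>p\<in>{(H,Yp i),(Yp i,H),(Xp,Ym i),(Ym i,Xp)}. u (fst p) * v (snd p) * brb (fst p) (snd p) (Yp i))"
    apply (rule glie_supp)
    using assms apply (simp add: gbasis_def)
    subgoal for a b by (cases a; cases b) (auto simp: gunit_def)
    done
  then show ?thesis using assms by (simp add: gunit_def algebra_simps)
qed

lemma glie_Ym: assumes "1 \<le> i" "i \<le> n - 2" shows "glie n u v (Ym i) = (u (Ym i) * v H - u H * v (Ym i) + u Xm * v (Yp i) - u (Yp i) * v Xm :: 'k::comm_ring_1)"
proof -
  have "glie n u v (Ym i) = (\<Sum>p\<in>{(H,Ym i),(Ym i,H),(Xm,Yp i),(Yp i,Xm)}. u (fst p) * v (snd p) * brb (fst p) (snd p) (Ym i))"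
    apply (rule glie_supp)
    using assms apply (simp add: gbasis_def)
    subgoal for a b by (cases a; cases b) (auto simp: gunit_def)
    done
  then show ?thesis using assms by (simp add: gunit_def algebra_simps)
qed

lemma glie_Zii: assumes "1 \<le> i" "i \<le> n - 2" shows "glie n u v (Z i i) = (u (Yp i) * v (Ym i) - u (Ym i) * v (Yp i) :: 'k::comm_ring_1)"
proof -
  have "glie n u v (Z i i) = (\<Sum>p\<in>{(Yp i,Ym i),(Ym i,Yp i)}. u (fst p) * v (snd p) * brb (fst p) (snd p) (Z i i))"
    apply (rule glie_supp)
    using assms apply (simp add: gbasis_def)
    subgoal for a b by (cases a; cases b) (auto simp: gunit_def)
    done
  then show ?thesis using assms by (simp add: gunit_def algebra_simps)
qed

lemma glie_Zij: assumes "1 \<le> i" "i < j" "j \<le> n - 2" shows "glie n u v (Z i j) = (u (Yp i) * v (Ym j) - u (Ym j) * v (Yp i) + u (Yp j) * v (Ym i) - u (Ym i) * v (Yp j) :: 'k::comm_ring_1)"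
proof -
  have "glie n u v (Z i j) = (\<Sum>p\<in>{(Yp i,Ym j),(Ym j,Yp i),(Yp j,Ym i),(Ym i,Yp j)}. u (fst p) * v (snd p) * brb (fst p) (snd p) (Z i j))"
    apply (rule glie_supp)
    using assms apply (simp add: gbasis_def)
    subgoal for a b by (cases a; cases b) (auto simp: gunit_def)
    done
  then show ?thesis using assms by (simp add: gunit_def algebra_simps)
qed

lemma rho_col1: "2 \<le> n \<Longrightarrow> rho n u r (n-1) = (if r = n-1 then u H else if r = n then u Xm
   else if n < r \<and> r \<le> msize n then - u (Ym (r-n)) else 0)"
  by (auto simp: rho_def msize_def Let_def)

lemma rho_col2: "2 \<le> n \<Longrightarrow> rho n u r n = (if r = n-1 then u Xp else if r = n then - u H
   else if n < r \<and> r \<le> msize n then u (Yp (r-n)) else 0)"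
  by (auto simp: rho_def msize_def Let_def)

lemma rho_row1: "2 \<le> n \<Longrightarrow> rho n u (n-1) c = (if 1 \<le> c \<and> c \<le> n-2 then u (Yp c) else if c = n-1 then u H
   else if c = n then u Xp else 0)"
  by (auto simp: rho_def msize_def Let_def)

lemma rho_row2: "2 \<le> n \<Longrightarrow> rho n u n c = (if 1 \<le> c \<and> c \<le> n-2 then u (Ym c) else if c = n-1 then u Xm
   else if c = n then - u H else 0)"
  by (auto simp: rho_def msize_def Let_def)

lemma mmul_rho:
  fixes u v :: "gb \<Rightarrow> 'k::comm_ring_1"
  assumes "2 \<le> n"
  shows "mmul n (rho n u) (rho n v) r c = rho n u r (n-1) * rho n v (n-1) c + rho n u r n * rho n v n c"
proof -
  have "mmul n (rho n u) (rho n v) r c = (\<Sum>k\<in>{n-1, n}. rho n u r k * rho n v k c)"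
    unfolding mmul_def
  proof (rule sum.mono_neutral_right)
    show "\<forall>k\<in>{1..msize n} - {n - 1, n}. rho n u r k * rho n v k c = 0"
    proof
      fix k assume k: "k \<in> {1..msize n} - {n - 1, n}"
      show "rho n u r k * rho n v k c = 0"
      proof (cases "k \<le> n - 2")
        case True
        then have "rho n v k c = 0" by (simp add: rho_def)
        then show ?thesis by simp
      next
        case False
        with k have "k > n" by auto
        then have "rho n u r k = 0" by (auto simp: rho_def Let_def)
        then show ?thesis by simp
      qed
    qed
  qed (use assms in \<open>auto simp: msize_def\<close>)
  also have "\<dots> = rho n u r (n-1) * rho n v (n-1) c + rho n u r n * rho n v n c"
    using assms by simp
  finally show ?thesis .
qed

lemma rho_hom_entry:
  fixes u v :: "gb \<Rightarrow> 'k::comm_ring_1"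
  assumes n: "2 \<le> n"
  shows "rho n (glie n u v) r c = mcomm n (rho n u) (rho n v) r c"
proof -
  have R: "mcomm n (rho n u) (rho n v) r c =
     rho n u r (n-1) * rho n v (n-1) c + rho n u r n * rho n v n c
     - (rho n v r (n-1) * rho n u (n-1) c + rho n v r n * rho n u n c)"
    unfolding mcomm_def using mmul_rho[OF n, of u v r c] mmul_rho[OF n, of v u r c] by simp
  note cs = rho_col1[OF n] rho_col2[OF n] rho_row1[OF n] rho_row2[OF n]
  show ?thesis
  proof (cases "r < 1 \<or> c < 1 \<or> r > msize n \<or> c > msize n")
    case True
    then consider "r < 1 \<or> r > msize n" | "c < 1 \<or> c > msize n" by blast
    then show ?thesis
    proof cases
      case 1
      then have "rho n (glie n u v) r c = 0" "rho n u r (n-1) = 0" "rho n u r n = 0"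
        "rho n v r (n-1) = 0" "rho n v r n = 0"
        by (auto simp: rho_def)
      then show ?thesis unfolding R by simp
    next
      case 2
      then have "rho n (glie n u v) r c = 0" "rho n u (n-1) c = 0" "rho n u n c = 0"
        "rho n v (n-1) c = 0" "rho n v n c = 0"
        by (auto simp: rho_def)
      then show ?thesis unfolding R by simp
    qed
  next
    case False
    then have rc: "1 \<le> r" "1 \<le> c" "r \<le> msize n" "c \<le> msize n" "n \<le> msize n" "n - 1 \<noteq> n"
      "\<not> n - 1 \<le> n - 2" "\<not> n \<le> n - 2" "\<not> msize n < n - 1" "\<not> msize n < n"
      using n by (auto simp: msize_def)
    consider "r \<le> n - 2" | "r = n - 1" | "r = n" | "n < r" using n by linarith
    then show ?thesis
    proof cases
      case 1
      then show ?thesis unfolding R using n rc by (auto simp: cs rho_def)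
    next
      case 2
      consider "c \<le> n - 2" | "c = n - 1" | "c = n" | "n < c" using n by linarith
      then show ?thesis
      proof cases
        case 1
        then show ?thesis unfolding R using n rc 2
          by (simp add: cs rho_def glie_Yp algebra_simps)
      next
        case 2
        then show ?thesis unfolding R using n rc \<open>r = n - 1\<close>
          by (simp add: cs rho_def glie_H algebra_simps)
      next
        case 3
        then show ?thesis unfolding R using n rc \<open>r = n - 1\<close>
          by (simp add: cs rho_def glie_Xp[OF TrueI] algebra_simps)
      next
        case 4
        then show ?thesis unfolding R using n rc \<open>r = n - 1\<close>
          by (auto simp: cs rho_def)
      qed
    next
      case 3
      consider "c \<le> n - 2" | "c = n - 1" | "c = n" | "n < c" using n by linarith
      then show ?thesis
      proof cases
        case 1
        then show ?thesis unfolding R using n rc 3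
          by (simp add: cs rho_def glie_Ym algebra_simps)
      next
        case 2
        then show ?thesis unfolding R using n rc \<open>r = n\<close>
          by (simp add: cs rho_def glie_Xm[OF TrueI] algebra_simps)
      next
        case 3
        then show ?thesis unfolding R using n rc \<open>r = n\<close>
          by (simp add: cs rho_def glie_H algebra_simps)
      next
        case 4
        then show ?thesis unfolding R using n rc \<open>r = n\<close>
          by (auto simp: cs rho_def)
      qed
    next
      case 4
      define i where "i = r - n"
      have r: "r = n + i" "r \<noteq> n - 1" "r \<noteq> n" "\<not> r \<le> n - 2" "r - n = i" and i: "1 \<le> i" "i \<le> n - 2" using 4 rc n by (auto simp: i_def msize_def)
      consider "c \<le> n - 2" | "c = n - 1" | "c = n" | "n < c" using n by linarith
      then show ?thesis
      proof cases
        case 1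
        consider "i = c" | "i < c" | "c < i" by linarith
        then show ?thesis
        proof cases
          case 1
          then show ?thesis unfolding R using n rc \<open>c \<le> n - 2\<close> r i
            by (simp add: cs rho_def gmu_def glie_Zii algebra_simps)
        next
          case 2
          then show ?thesis unfolding R using n rc \<open>c \<le> n - 2\<close> r i
            by (simp add: cs rho_def gmu_def glie_Zij algebra_simps)
        next
          case 3
          then show ?thesis unfolding R using n rc \<open>c \<le> n - 2\<close> r i
            by (simp add: cs rho_def gmu_def glie_Zij algebra_simps)
        qed
      next
        case 2
        then show ?thesis unfolding R using n rc r i
          by (simp add: cs rho_def glie_Ym algebra_simps)
      next
        case 3
        then show ?thesis unfolding R using n rc r i
          by (simp add: cs rho_def glie_Yp algebra_simps)
      next
        case 4
        then show ?thesis unfolding R using n rc r i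
          by (auto simp: cs rho_def)
      qed
    qed
  qed
qed

lemma rho_add: "rho n (\<lambda>b. u b + v b) = (\<lambda>r c. rho n u r c + rho n v r c :: 'k::comm_ring_1)"
  by (rule ext)+ (simp add: rho_def gmu_def Let_def algebra_simps)

lemma rho_smult: "rho n (\<lambda>b. s * u b) = (\<lambda>r c. s * rho n u r c :: 'k::comm_ring_1)"
  by (rule ext)+ (simp add: rho_def gmu_def Let_def algebra_simps)

lemma rho_trace:
  fixes u :: "gb \<Rightarrow> 'k::comm_ring_1"
  assumes n: "2 \<le> n"
  shows "mtrace n (rho n u) = 0"
proof -
  have d: "rho n u i i = (if i = n - 1 then u H else 0) + (if i = n then - u H else 0)" for i
    using n by (auto simp: rho_def Let_def msize_def)
  have "mtrace n (rho n u) = (\<Sum>i\<in>{1..msize n}. (if i = n - 1 then u H else 0) + (if i = n then - u H else 0))"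
    unfolding mtrace_def d ..
  also have "\<dots> = u H + - u H"
    using n by (simp add: sum.distrib msize_def)
  finally show ?thesis by simp
qed

lemma rho_inj:
  fixes u v :: "gb \<Rightarrow> 'k::field_char_0"
  assumes n: "2 \<le> n" and u: "u \<in> gelem n" and v: "v \<in> gelem n" and eq: "rho n u = rho n v"
  shows "u = v"
proof
  fix b
  have e: "rho n u r c = rho n v r c" for r c using eq by simp
  have nm: "n \<le> msize n" "n - 1 \<noteq> n" "\<not> n - 1 \<le> n - 2" "\<not> n \<le> n - 2" "1 \<le> n - 1"
    using n by (auto simp: msize_def)
  show "u b = v b"
  proof (cases "b \<in> gbasis n")
    case False
    then show ?thesis using u v by (simp add: gelem_def)
  next
    case True
    show ?thesis
    proof (cases b)
      case H
      then show ?thesis using e[of "n-1" "n-1"] nm rho_col1[OF n, of u "n-1"] rho_col1[OF n, of v "n-1"] by simp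
    next
      case Xp
      then show ?thesis using e[of "n-1" "n"] nm rho_col2[OF n, of u "n-1"] rho_col2[OF n, of v "n-1"] by simp
    next
      case Xm
      then show ?thesis using e[of "n" "n-1"] nm rho_col1[OF n, of u "n"] rho_col1[OF n, of v "n"] by simp
    next
      case (Yp i)
      then have "1 \<le> i" "i \<le> n - 2" using True by (auto simp: gbasis_def)
      then show ?thesis using Yp e[of "n-1" i] nm rho_row1[OF n, of u i] rho_row1[OF n, of v i] by simp
    next
      case (Ym i)
      then have "1 \<le> i" "i \<le> n - 2" using True by (auto simp: gbasis_def)
      then show ?thesis using Ym e[of "n" i] nm rho_row2[OF n, of u i] rho_row2[OF n, of v i] by simp
    next
      case (Z i j)
      then have ij: "1 \<le> i" "i \<le> j" "j \<le> n - 2" using True by (auto simp: gbasis_def)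
      then have "i + n \<le> msize n" "\<not> i + n \<le> n - 2" "i + n \<noteq> n - 1" "i + n \<noteq> n" "i + n - n = i"
        by (auto simp: msize_def)
      then show ?thesis using Z ij e[of "i + n" j] nm by (auto simp: rho_def gmu_def split: if_splits)
    qed
  qed
qed

lemma rho_out:
  assumes "r < 1 \<or> c < 1 \<or> msize n < r \<or> msize n < c"
  shows "rho n u r c = 0"
proof -
  have "(r < 1 \<or> c < 1 \<or> msize n < r \<or> msize n < c) = True" using assms by simp
  then show ?thesis unfolding rho_def by (simp only: if_True)
qed


lemma img_Xp: "2 \<le> n \<Longrightarrow> rho n (gunit Xp :: gb \<Rightarrow> 'k::comm_ring_1) = E (n-1) n"
  by (rule ext)+ (auto simp: rho_def E_def gunit_def gmu_def Let_def msize_def)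
lemma img_Xm: "2 \<le> n \<Longrightarrow> rho n (gunit Xm :: gb \<Rightarrow> 'k::comm_ring_1) = E n (n-1)"
  by (rule ext)+ (auto simp: rho_def E_def gunit_def gmu_def Let_def msize_def)
lemma img_H: "2 \<le> n \<Longrightarrow> rho n (gunit H :: gb \<Rightarrow> 'k::comm_ring_1) = (\<lambda>r c. E (n - 1) (n - 1) r c - E n n r c)"
  by (rule ext)+ (auto simp: rho_def E_def gunit_def gmu_def Let_def msize_def)

lemma img_Yp: assumes n: "2 \<le> n" and i: "1 \<le> i" "i \<le> n - 2"
  shows "rho n (gunit (Yp i) :: gb \<Rightarrow> 'k::comm_ring_1) = (\<lambda>r c. E (n - 1) i r c + E (n + i) n r c)"
proof (rule ext, rule ext)
  fix r c
  have m: "n \<le> msize n" "n + i \<le> msize n" "n - 1 \<noteq> n" "\<not> n - 1 \<le> n - 2" "\<not> n \<le> n - 2" "n - 1 \<noteq> n + i" "n \<noteq> n + i"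
    "\<not> n + i \<le> n - 2" "n + i - n = i" "1 \<le> n - 1" using n i by (auto simp: msize_def)
  consider "r < 1 \<or> r > msize n" | "1 \<le> r \<and> r \<le> n - 2" | "r = n - 1" | "r = n" | "n < r \<and> r \<le> msize n"
    using n by linarith
  then show "rho n (gunit (Yp i)) r c = (E (n - 1) i r c + E (n + i) n r c :: 'k)"
  proof cases
    case 1
    then have "rho n (gunit (Yp i)) r c = (0::'k)" by (intro rho_out) auto
    then show ?thesis using 1 m by (auto simp: E_def)
  next
    case 2 then show ?thesis using m by (auto simp: rho_def E_def)
  next
    case 3 then show ?thesis using m i by (auto simp: rho_def E_def gunit_def)
  next
    case 4 then show ?thesis using m i by (auto simp: rho_def E_def gunit_def)
  next
    case 5 then show ?thesis using m i by (auto simp: rho_def E_def gunit_def gmu_def Let_def)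
  qed
qed
lemma img_Ym: assumes n: "2 \<le> n" and i: "1 \<le> i" "i \<le> n - 2"
  shows "rho n (gunit (Ym i) :: gb \<Rightarrow> 'k::comm_ring_1) = (\<lambda>r c. E n i r c - E (n + i) (n - 1) r c)"
proof (rule ext, rule ext)
  fix r c
  have m: "n \<le> msize n" "n + i \<le> msize n" "n - 1 \<noteq> n" "\<not> n - 1 \<le> n - 2" "\<not> n \<le> n - 2" "n - 1 \<noteq> n + i" "n \<noteq> n + i"
    "\<not> n + i \<le> n - 2" "n + i - n = i" "1 \<le> n - 1" using n i by (auto simp: msize_def)
  consider "r < 1 \<or> r > msize n" | "1 \<le> r \<and> r \<le> n - 2" | "r = n - 1" | "r = n" | "n < r \<and> r \<le> msize n"
    using n by linarith
  then show "rho n (gunit (Ym i)) r c = (E n i r c - E (n + i) (n - 1) r c :: 'k)"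
  proof cases
    case 1
    then have "rho n (gunit (Ym i)) r c = (0::'k)" by (intro rho_out) auto
    then show ?thesis using 1 m by (auto simp: E_def)
  next
    case 2 then show ?thesis using m by (auto simp: rho_def E_def)
  next
    case 3 then show ?thesis using m i by (auto simp: rho_def E_def gunit_def)
  next
    case 4 then show ?thesis using m i by (auto simp: rho_def E_def gunit_def)
  next
    case 5 then show ?thesis using m i by (auto simp: rho_def E_def gunit_def gmu_def Let_def)
  qed
qed
lemma img_Z: assumes n: "2 \<le> n" and i: "1 \<le> i" "i \<le> j" "j \<le> n - 2"
  shows "rho n (gunit (Z i j) :: gb \<Rightarrow> 'k::comm_ring_1) = (\<lambda>r c. E (i + n) j r c + E (j + n) i r c)"
proof (rule ext, rule ext)
  fix r c
  have m: "n \<le> msize n" "n + i \<le> msize n" "n - 1 \<noteq> n" "\<not> n - 1 \<le> n - 2" "\<not> n \<le> n - 2" "n - 1 \<noteq> n + i" "n \<noteq> n + i"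
    "\<not> n + i \<le> n - 2" "n + i - n = i" "1 \<le> n - 1" "j + n \<le> msize n" "i + n \<le> msize n" using n i by (auto simp: msize_def)
  consider "r < 1 \<or> r > msize n" | "1 \<le> r \<and> r \<le> n - 2" | "r = n - 1" | "r = n" | "n < r \<and> r \<le> msize n"
    using n by linarith
  then show "rho n (gunit (Z i j)) r c = (E (i + n) j r c + E (j + n) i r c :: 'k)"
  proof cases
    case 1
    then have "rho n (gunit (Z i j)) r c = (0::'k)" by (intro rho_out) auto
    moreover have "E (i + n) j r c = (0::'k)" "E (j + n) i r c = (0::'k)" using 1 m by (auto simp: E_def)
    ultimately show ?thesis by simp
  next
    case 2 then show ?thesis using m by (auto simp: rho_def E_def)
  next
    case 3 then show ?thesis using m i by (auto simp: rho_def E_def gunit_def)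
  next
    case 4 then show ?thesis using m i by (auto simp: rho_def E_def gunit_def)
  next
    case 5
    define k where "k = r - n"
    have r: "r = n + k" "r \<noteq> n - 1" "r \<noteq> n" "\<not> r \<le> n - 2" "r - n = k" "1 \<le> r" "r \<le> msize n"
      using 5 n by (auto simp: k_def)
    have L: "rho n (gunit (Z i j)) r c = (if 1 \<le> c \<and> c \<le> n - 2 then gmu (gunit (Z i j)) k c else (0::'k))"
      using r by (auto simp: rho_def gunit_def Let_def)
    have R: "E (i + n) j r c + E (j + n) i r c = (if k = i \<and> c = j then 1 else 0) + (if k = j \<and> c = i then (1::'k) else 0)"
      using r by (auto simp: E_def)
    show ?thesis unfolding L R using i by (auto simp: gmu_def gunit_def)
  qed
qed

lemma rho_faithful_gen:
  assumes n: "2 \<le> n"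
  shows "rho_faithful_sl n TYPE('k::field_char_0)"
  unfolding rho_faithful_sl_def
proof (intro conjI ballI allI impI)
  show "inj_on (rho n) (gelem n :: (gb \<Rightarrow> 'k) set)"
    by (rule inj_onI) (rule rho_inj[OF n])
  fix u v :: "gb \<Rightarrow> 'k"
  show "mtrace n (rho n u) = 0" by (rule rho_trace[OF n])
  show "rho n (glie n u v) = mcomm n (rho n u) (rho n v)"
    by (rule ext)+ (rule rho_hom_entry[OF n])
qed (use n in \<open>auto simp: rho_add rho_smult img_Xp img_Xm img_H img_Yp img_Ym img_Z\<close>)

theorem proposition3p5:
  fixes n :: nat
  assumes "n \<ge> 2"
  shows "rho_faithful_sl n TYPE(real) \<and> rho_faithful_sl n TYPE(complex)"
  using rho_faithful_gen[OF assms, where 'k=real] rho_faithful_gen[OF assms, where 'k=complex] by blast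

end
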